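(* Let $f:\mathbb{R}_+^n\to\mathbb{R}$. Then $f$ is supermodular if and only if for all $x,y,z\in\mathbb{R}_+^n$ with $y\wedge z=0$ one has $f(x\vee y\vee z)+f(x)\ge f(x\vee y)+f(x\vee z)$.
   Context: For $x,y\in\mathbb{R}_+^n$, $x\vee y$ and $x\wedge y$ denote the componentwise maximum and minimum. A function $f:\mathbb{R}_+^n\to\mathbb{R}$ is supermodular if $f(x\vee y)+f(x\wedge y)\ge f(x)+f(y)$ for all $x,y\in\mathbb{R}_+^n$. *)

theory Defs
  imports "HOL-Analysis.Analysis"
begin

definition nonneg_orthant :: "(real ^ 'n) set" where
  "nonneg_orthant = {x. \<forall>i. 0 \<le> x $ i}"

definition vjoin :: "real ^ 'n \<Rightarrow> real ^ 'n \<Rightarrow> real ^ 'n" where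
  "vjoin x y = (\<chi> i. max (x $ i) (y $ i))"

definition vmeet :: "real ^ 'n \<Rightarrow> real ^ 'n \<Rightarrow> real ^ 'n" where
  "vmeet x y = (\<chi> i. min (x $ i) (y $ i))"

definition supermodular_on_orthant :: "(real ^ 'n \<Rightarrow> real) \<Rightarrow> bool" where
  "supermodular_on_orthant f \<longleftrightarrow>
     (\<forall>x\<in>nonneg_orthant. \<forall>y\<in>nonneg_orthant.
        f (vjoin x y) + f (vmeet x y) \<ge> f x + f y)"

end

theory Submission
  imports Defs
begin

theorem lemma3p4:
  fixes f :: "real ^ 'n \<Rightarrow> real"
  shows "supermodular_on_orthant f \<longleftrightarrow>
    (\<forall>x\<in>nonneg_orthant. \<forall>y\<in>nonneg_orthant. \<forall>z\<in>nonneg_orthant.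
       vmeet y z = 0 \<longrightarrow>
       f (vjoin (vjoin x y) z) + f x \<ge> f (vjoin x y) + f (vjoin x z))"
proof
  assume S: "supermodular_on_orthant f"
  show "\<forall>x\<in>nonneg_orthant. \<forall>y\<in>nonneg_orthant. \<forall>z\<in>nonneg_orthant.
       vmeet y z = 0 \<longrightarrow>
       f (vjoin (vjoin x y) z) + f x \<ge> f (vjoin x y) + f (vjoin x z)"
  proof (intro ballI impI)
    fix x y z :: "real ^ 'n"
    assume x: "x \<in> nonneg_orthant" and y: "y \<in> nonneg_orthant" and z: "z \<in> nonneg_orthant"
      and m: "vmeet y z = 0"
    have a: "vjoin x y \<in> nonneg_orthant" "vjoin x z \<in> nonneg_orthant"
      using x y z by (auto simp: nonneg_orthant_def vjoin_def le_max_iff_disj)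
    have e1: "vjoin (vjoin x y) (vjoin x z) = vjoin (vjoin x y) z"
      by (auto simp: vjoin_def vec_eq_iff)
    have mi: "\<And>i. min (y $ i) (z $ i) = 0" using m by (auto simp: vmeet_def vec_eq_iff)
    have e2: "vmeet (vjoin x y) (vjoin x z) = x"
    proof -
      { fix i
        have "min (max (x$i) (y$i)) (max (x$i) (z$i)) = x $ i"
          using mi[of i] x unfolding nonneg_orthant_def by (smt (verit) mem_Collect_eq) }
      thus ?thesis by (auto simp: vmeet_def vjoin_def vec_eq_iff)
    qed
    show "f (vjoin (vjoin x y) z) + f x \<ge> f (vjoin x y) + f (vjoin x z)"
      using S a e1 e2 unfolding supermodular_on_orthant_def by metis
  qed
next
  assume H: "\<forall>x\<in>nonneg_orthant. \<forall>y\<in>nonneg_orthant. \<forall>z\<in>nonneg_orthant.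
       vmeet y z = 0 \<longrightarrow>
       f (vjoin (vjoin x y) z) + f x \<ge> f (vjoin x y) + f (vjoin x z)"
  show "supermodular_on_orthant f"
    unfolding supermodular_on_orthant_def
  proof (intro ballI)
    fix a b :: "real ^ 'n"
    assume a: "a \<in> nonneg_orthant" and b: "b \<in> nonneg_orthant"
    define x where "x = vmeet a b"
    define y :: "real ^ 'n" where "y = (\<chi> i. if a$i > b$i then a$i else 0)"
    define z :: "real ^ 'n" where "z = (\<chi> i. if b$i > a$i then b$i else 0)"
    have xn: "x \<in> nonneg_orthant" "y \<in> nonneg_orthant" "z \<in> nonneg_orthant"
      using a b by (auto simp: nonneg_orthant_def x_def y_def z_def vmeet_def)
    have m: "vmeet y z = 0" using a b unfolding vmeet_def y_def z_def vec_eq_iff nonneg_orthant_def by (simp add: min_def) (smt (verit))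
    have e1: "vjoin x y = a" using a b
      unfolding vjoin_def vmeet_def x_def y_def vec_eq_iff nonneg_orthant_def by (simp add: max_def min_def) (smt (verit))
    have e2: "vjoin x z = b" using a b
      unfolding vjoin_def vmeet_def x_def z_def vec_eq_iff nonneg_orthant_def by (simp add: max_def min_def) (smt (verit))
    have e3: "vjoin (vjoin x y) z = vjoin a b" using a b
      unfolding vjoin_def vmeet_def x_def y_def z_def vec_eq_iff nonneg_orthant_def by (simp add: max_def min_def) (smt (verit))
    have "f (vjoin (vjoin x y) z) + f x \<ge> f (vjoin x y) + f (vjoin x z)"
      using H xn m by blast
    thus "f (vjoin a b) + f (vmeet a b) \<ge> f a + f b" using e1 e2 e3 x_def by simp
  qed
qed

end
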